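(* Let $B_0,B_1\subset\mathbb Z^k$ be $k$-dimensional boxes of size $1$, let $\bar S\subset\mathbb Q^k$ be the convex hull of $B_0\cup B_1$ in $\mathbb Q^k$, and let $S=\bar S\cap\mathbb Z^k$. Then $S$ is lattice path connected.
   Context: A $k$-dimensional box of size $1$ is $\{\vec z\in\mathbb Z^k: c_i\le z_i\le c_i+1,\ i=1,\dots,k\}$ for some $c_i\in\mathbb Z$. A lattice path is a sequence $(T_i)_{i\ge1}$ in $\mathbb Z^k$ with $T_i-T_{i-1}\in\{\pm\vec e_1,\dots,\pm\vec e_k\}$ for all $i>1$. A set $S\subset\mathbb Z^k$ is lattice path connected if for all $\vec z_1,\vec z_2\in S$ there is a lattice path contained in $S$ with $T_1=\vec z_1$ and $T_i=\vec z_2$ for some $i\ge1$. *)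

theory Defs
  imports "HOL-Analysis.Analysis"
begin

text \<open>Points of Z^k are vectors int^'n, points of Q^k are rat^'n (k = CARD('n)).\<close>

definition box1 :: "int^'n \<Rightarrow> (int^'n) set" where
  "box1 c = {z. \<forall>i. c$i \<le> z$i \<and> z$i \<le> c$i + 1}"

definition is_box1 :: "(int^'n) set \<Rightarrow> bool" where
  "is_box1 B \<longleftrightarrow> (\<exists>c. B = box1 c)"

definition int_to_rat_vec :: "int^'n \<Rightarrow> rat^'n" where
  "int_to_rat_vec z = (\<chi> i. of_int (z$i))"

definition rat_convex_hull :: "(rat^'n) set \<Rightarrow> (rat^'n) set" where
  "rat_convex_hull A = {x. \<exists>F u. finite F \<and> F \<subseteq> A \<and> (\<forall>a\<in>F. 0 \<le> u a) \<and>
        sum u F = 1 \<and> x = (\<Sum>a\<in>F. u a *s a)}"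

definition lattice_step :: "int^'n \<Rightarrow> int^'n \<Rightarrow> bool" where
  "lattice_step x y \<longleftrightarrow> (\<exists>i. y - x = axis i 1 \<or> y - x = axis i (-1))"

definition lattice_path_connected :: "(int^'n) set \<Rightarrow> bool" where
  "lattice_path_connected S \<longleftrightarrow>
     (\<forall>z1\<in>S. \<forall>z2\<in>S. \<exists>T :: nat \<Rightarrow> int^'n. \<exists>n.
        (\<forall>i. T i \<in> S) \<and> (\<forall>i. lattice_step (T i) (T (Suc i))) \<and> T 0 = z1 \<and> T n = z2)"

end

theory Submission
  imports Defs
begin

lemma rch_mono: "A \<subseteq> B \<Longrightarrow> rat_convex_hull A \<subseteq> rat_convex_hull B"
  unfolding rat_convex_hull_def by blast

lemma rch_base: "a \<in> A \<Longrightarrow> a \<in> rat_convex_hull A"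
  unfolding rat_convex_hull_def
  by (rule CollectI, rule exI[of _ "{a}"], rule exI[of _ "\<lambda>_. 1"]) simp

lemma rch_convex:
  assumes x: "x \<in> rat_convex_hull A" and y: "y \<in> rat_convex_hull A" and l: "0 \<le> l" "l \<le> 1"
  shows "(1 - l) *s x + l *s y \<in> rat_convex_hull A"
proof -
  obtain F u where F: "finite F" "F \<subseteq> A" "\<forall>a\<in>F. 0 \<le> u a" "sum u F = 1" "x = (\<Sum>a\<in>F. u a *s a)"
    using x unfolding rat_convex_hull_def by blast
  obtain G v where G: "finite G" "G \<subseteq> A" "\<forall>a\<in>G. 0 \<le> v a" "sum v G = 1" "y = (\<Sum>a\<in>G. v a *s a)"
    using y unfolding rat_convex_hull_def by blast
  define w where "w a = (1 - l) * (if a \<in> F then u a else 0) + l * (if a \<in> G then v a else 0)" for a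
  have fin: "finite (F \<union> G)" using F G by simp
  have s1: "(\<Sum>a\<in>F \<union> G. (if a \<in> F then u a else 0)) = sum u F"
    using sum.inter_restrict[OF fin, of u F] by (simp add: Int_absorb1)
  have s2: "(\<Sum>a\<in>F \<union> G. (if a \<in> G then v a else 0)) = sum v G"
    using sum.inter_restrict[OF fin, of v G] by (simp add: Int_absorb1)
  have t1: "(\<Sum>a\<in>F \<union> G. (if a \<in> F then u a *s a else 0)) = (\<Sum>a\<in>F. u a *s a)"
    using sum.inter_restrict[OF fin, of "\<lambda>a. u a *s a" F] by (simp add: Int_absorb1)
  have t2: "(\<Sum>a\<in>F \<union> G. (if a \<in> G then v a *s a else 0)) = (\<Sum>a\<in>G. v a *s a)"
    using sum.inter_restrict[OF fin, of "\<lambda>a. v a *s a" G] by (simp add: Int_absorb1)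
  have "sum w (F \<union> G) = 1"
    unfolding w_def sum.distrib sum_distrib_left[symmetric] s1 s2 using F G by simp
  moreover have "\<forall>a\<in>F \<union> G. 0 \<le> w a" using F G l unfolding w_def by auto
  moreover have "(\<Sum>a\<in>F \<union> G. w a *s a) = (1 - l) *s x + l *s y"
  proof -
    have "(\<Sum>a\<in>F \<union> G. w a *s a) = (\<Sum>a\<in>F \<union> G. (1 - l) *s (if a \<in> F then u a *s a else 0) + l *s (if a \<in> G then v a *s a else 0))"
      by (rule sum.cong) (auto simp: w_def vec_eq_iff algebra_simps)
    also have "\<dots> = (1 - l) *s x + l *s y"
      unfolding sum.distrib F(5) G(5) t1[symmetric] t2[symmetric]
      by (simp add: vec_eq_iff sum_distrib_left sum_subtractf)
    finally show ?thesis .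
  qed
  ultimately show ?thesis unfolding rat_convex_hull_def using fin F G
    by (intro CollectI exI[of _ "F \<union> G"] exI[of _ w]) auto
qed


lemma ofi_le1: "(a::int) \<le> b + 1 \<Longrightarrow> rat_of_int a \<le> rat_of_int b + 1"
  by (metis of_int_1 of_int_add of_int_le_iff)

lemma fill:
  fixes c :: "int^'n" and x :: "rat^'n"
  shows "(\<forall>i. of_int (c$i) \<le> x$i \<and> x$i \<le> of_int (c$i) + 1) \<Longrightarrow>
         x \<in> rat_convex_hull (int_to_rat_vec ` box1 c)"
proof (induction "card {i. x$i \<noteq> of_int (c$i) \<and> x$i \<noteq> of_int (c$i) + 1}" arbitrary: x rule: less_induct)
  case less
  show ?case
  proof (cases "\<exists>i. x$i \<noteq> of_int (c$i) \<and> x$i \<noteq> of_int (c$i) + 1")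
    case False
    define z where "z = (\<chi> i. if x$i = of_int (c$i) then c$i else c$i + 1)"
    have "z \<in> box1 c" unfolding z_def box1_def by auto
    moreover have "x = int_to_rat_vec z"
      using False unfolding z_def int_to_rat_vec_def vec_eq_iff by auto
    ultimately show ?thesis by (intro rch_base) auto
  next
    case True
    then obtain i where i: "x$i \<noteq> of_int (c$i)" "x$i \<noteq> of_int (c$i) + 1" by blast
    define l where "l = x$i - of_int (c$i)"
    have l: "0 \<le> l" "l \<le> 1" using less.prems[rule_format, of i] unfolding l_def by auto
    define x0 where "x0 = (\<chi> j. if j = i then of_int (c$j) else x$j)"
    define x1 where "x1 = (\<chi> j. if j = i then of_int (c$j) + 1 else x$j)"
    let ?N = "\<lambda>x::rat^'n. {i. x$i \<noteq> of_int (c$i) \<and> x$i \<noteq> of_int (c$i) + 1}"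
    have "?N x0 \<subset> ?N x" using i unfolding x0_def by auto
    hence c0: "card (?N x0) < card (?N x)" by (intro psubset_card_mono) auto
    have "?N x1 \<subset> ?N x" using i unfolding x1_def by auto
    hence c1: "card (?N x1) < card (?N x)" by (intro psubset_card_mono) auto
    have h0: "x0 \<in> rat_convex_hull (int_to_rat_vec ` box1 c)"
      using less.hyps[OF c0] less.prems unfolding x0_def by auto
    have h1: "x1 \<in> rat_convex_hull (int_to_rat_vec ` box1 c)"
      using less.hyps[OF c1] less.prems unfolding x1_def by auto
    have "x = (1 - l) *s x0 + l *s x1"
      unfolding vec_eq_iff x0_def x1_def l_def by (auto simp: algebra_simps)
    then show ?thesis using rch_convex[OF h0 h1 l] by simp
  qed
qed

definition G :: "int^'n \<Rightarrow> int^'n \<Rightarrow> int^'n \<Rightarrow> rat \<Rightarrow> bool" where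
  "G c d z t \<longleftrightarrow> 0 \<le> t \<and> t \<le> 1 \<and> (\<forall>i. of_int (c$i) + t * (of_int (d$i) - of_int (c$i)) \<le> of_int (z$i)
       \<and> of_int (z$i) \<le> of_int (c$i) + t * (of_int (d$i) - of_int (c$i)) + 1)"

lemma forward:
  fixes c d :: "int^'n"
  assumes "x \<in> rat_convex_hull (int_to_rat_vec ` (box1 c \<union> box1 d))"
  shows "\<exists>t. 0 \<le> t \<and> t \<le> 1 \<and> (\<forall>i. of_int (c$i) + t * (of_int (d$i) - of_int (c$i)) \<le> x$i
       \<and> x$i \<le> of_int (c$i) + t * (of_int (d$i) - of_int (c$i)) + 1)"
proof -
  obtain F u where F: "finite F" "F \<subseteq> int_to_rat_vec ` (box1 c \<union> box1 d)" "\<forall>a\<in>F. 0 \<le> u a"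
    "sum u F = 1" "x = (\<Sum>a\<in>F. u a *s a)"
    using assms unfolding rat_convex_hull_def by blast
  define ta where "ta a = (if a \<in> int_to_rat_vec ` box1 c then 0 else 1::rat)" for a
  define t where "t = (\<Sum>a\<in>F. u a * ta a)"
  have ta: "0 \<le> ta a \<and> ta a \<le> 1 \<and> (\<forall>i. of_int (c$i) + ta a * (of_int (d$i) - of_int (c$i)) \<le> a$i
       \<and> a$i \<le> of_int (c$i) + ta a * (of_int (d$i) - of_int (c$i)) + 1)" if "a \<in> F" for a
  proof (cases "a \<in> int_to_rat_vec ` box1 c")
    case True
    then show ?thesis unfolding ta_def box1_def int_to_rat_vec_def by (auto intro!: ofi_le1)
  next
    case False
    with that F(2) have "a \<in> int_to_rat_vec ` box1 d" by auto
    with False show ?thesis unfolding ta_def box1_def int_to_rat_vec_def by (auto intro!: ofi_le1)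
  qed
  have t0: "0 \<le> t" unfolding t_def using F ta by (intro sum_nonneg) auto
  have "t \<le> (\<Sum>a\<in>F. u a * 1)" unfolding t_def using F ta by (intro sum_mono mult_left_mono) auto
  hence t1: "t \<le> 1" using F by simp
  have comb: "(\<Sum>a\<in>F. u a * (p + ta a * q)) = p + t * q" for p q :: rat
  proof -
    have "(\<Sum>a\<in>F. u a * (p + ta a * q)) = p * sum u F + (\<Sum>a\<in>F. u a * ta a) * q"
      by (simp add: algebra_simps sum.distrib sum_distrib_left sum_distrib_right)
    then show ?thesis using F(4) by (simp add: t_def)
  qed
  have "\<forall>i. of_int (c$i) + t * (of_int (d$i) - of_int (c$i)) \<le> x$i
       \<and> x$i \<le> of_int (c$i) + t * (of_int (d$i) - of_int (c$i)) + 1"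
  proof
    fix i
    have xi: "x$i = (\<Sum>a\<in>F. u a * a$i)" using F(5) by simp
    have "(\<Sum>a\<in>F. u a * (of_int (c$i) + ta a * (of_int (d$i) - of_int (c$i)))) \<le> (\<Sum>a\<in>F. u a * a$i)"
      using F ta by (intro sum_mono mult_left_mono) auto
    moreover have "(\<Sum>a\<in>F. u a * a$i) \<le> (\<Sum>a\<in>F. u a * ((of_int (c$i) + 1) + ta a * (of_int (d$i) - of_int (c$i))))"
      using F ta by (intro sum_mono mult_left_mono) (auto simp: algebra_simps)
    ultimately show "of_int (c$i) + t * (of_int (d$i) - of_int (c$i)) \<le> x$i
       \<and> x$i \<le> of_int (c$i) + t * (of_int (d$i) - of_int (c$i)) + 1"
      unfolding xi comb by simp
  qed
  with t0 t1 show ?thesis by blast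
qed

lemma backward:
  fixes c d z :: "int^'n"
  assumes "G c d z t"
  shows "int_to_rat_vec z \<in> rat_convex_hull (int_to_rat_vec ` (box1 c \<union> box1 d))"
proof -
  define e where "e i = (of_int (d$i) - of_int (c$i) :: rat)" for i
  define x0 where "x0 = (\<chi> i. of_int (z$i) - t * e i)"
  define x1 where "x1 = (\<chi> i. of_int (z$i) - t * e i + e i)"
  have b: "of_int (c$i) + t * e i \<le> of_int (z$i) \<and> of_int (z$i) \<le> of_int (c$i) + t * e i + 1" for i
    using assms unfolding G_def e_def by simp
  have "\<forall>i. of_int (c$i) \<le> x0$i \<and> x0$i \<le> of_int (c$i) + 1"
  proof
    fix i show "of_int (c$i) \<le> x0$i \<and> x0$i \<le> of_int (c$i) + 1"
    proof -
      have "x0$i = of_int (z$i) - t * e i" unfolding x0_def by simp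
      then show ?thesis using b[of i] by linarith
    qed
  qed
  hence "x0 \<in> rat_convex_hull (int_to_rat_vec ` box1 c)" by (rule fill)
  moreover have "rat_convex_hull (int_to_rat_vec ` box1 c) \<subseteq> rat_convex_hull (int_to_rat_vec ` (box1 c \<union> box1 d))"
    by (intro rch_mono image_mono) auto
  ultimately have h0: "x0 \<in> rat_convex_hull (int_to_rat_vec ` (box1 c \<union> box1 d))" by (rule subsetD[rotated])
  have "\<forall>i. of_int (d$i) \<le> x1$i \<and> x1$i \<le> of_int (d$i) + 1"
  proof
    fix i show "of_int (d$i) \<le> x1$i \<and> x1$i \<le> of_int (d$i) + 1"
    proof -
      have "x1$i = of_int (z$i) - t * e i + e i" unfolding x1_def by simp
      then show ?thesis using b[of i] unfolding e_def by linarith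
    qed
  qed
  hence "x1 \<in> rat_convex_hull (int_to_rat_vec ` box1 d)" by (rule fill)
  moreover have "rat_convex_hull (int_to_rat_vec ` box1 d) \<subseteq> rat_convex_hull (int_to_rat_vec ` (box1 c \<union> box1 d))"
    by (intro rch_mono image_mono) auto
  ultimately have h1: "x1 \<in> rat_convex_hull (int_to_rat_vec ` (box1 c \<union> box1 d))" by (rule subsetD[rotated])
  have t: "0 \<le> t" "t \<le> 1" using assms unfolding G_def by auto
  have "int_to_rat_vec z = (1 - t) *s x0 + t *s x1"
    unfolding vec_eq_iff x0_def x1_def int_to_rat_vec_def by (simp add: algebra_simps)
  then show ?thesis using rch_convex[OF h0 h1 t] by simp
qed


definition upd :: "int^'n \<Rightarrow> 'n \<Rightarrow> int \<Rightarrow> int^'n" where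
  "upd z i v = (\<chi> j. if j = i then v else z$j)"

definition M :: "int^'n \<Rightarrow> int^'n \<Rightarrow> nat" where
  "M c z = (\<Sum>i\<in>UNIV. nat \<bar>z$i - c$i\<bar>)"

lemma upd_G:
  assumes "G c d z s"
    "of_int (c$i) + s * (of_int (d$i) - of_int (c$i)) \<le> of_int v"
    "of_int v \<le> of_int (c$i) + s * (of_int (d$i) - of_int (c$i)) + 1"
  shows "G c d (upd z i v) s"
  using assms unfolding G_def upd_def by auto

lemma upd_M:
  assumes "\<bar>v - c$i\<bar> < \<bar>z$i - c$i\<bar>"
  shows "M c (upd z i v) < M c z"
  unfolding M_def
proof (rule sum_strict_mono_ex1)
  show "\<forall>j\<in>UNIV. nat \<bar>upd z i v $ j - c $ j\<bar> \<le> nat \<bar>z $ j - c $ j\<bar>"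
    using assms unfolding upd_def by auto
  show "\<exists>j\<in>UNIV. nat \<bar>upd z i v $ j - c $ j\<bar> < nat \<bar>z $ j - c $ j\<bar>"
    using assms unfolding upd_def by (intro bexI[of _ i]) auto
qed simp

lemma upd_step_plus: "lattice_step z (upd z i (z$i + 1))"
  unfolding lattice_step_def upd_def
  by (rule exI[of _ i], rule disjI1) (auto simp: vec_eq_iff axis_def)

lemma upd_step_minus: "lattice_step z (upd z i (z$i - 1))"
  unfolding lattice_step_def upd_def
  by (rule exI[of _ i], rule disjI2) (auto simp: vec_eq_iff axis_def)

lemma axis_neg: "axis i (-1) = - (axis i 1 :: int^'n)"
  by (simp add: vec_eq_iff axis_def)

lemma step_sym:
  fixes x y :: "int^'n"
  assumes "lattice_step x y" shows "lattice_step y x"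
proof -
  obtain i where h: "y - x = axis i 1 \<or> y - x = axis i (-1)" using assms unfolding lattice_step_def by blast
  from h have "x - y = - axis i 1 \<or> x - y = - axis i (-1)"
    by (metis minus_diff_eq)
  hence "x - y = axis i (-1) \<or> x - y = axis i 1" unfolding axis_neg by simp
  then show ?thesis unfolding lattice_step_def by blast
qed


lemma G_box: "G c d z 0 \<longleftrightarrow> (\<forall>i. c$i \<le> z$i \<and> z$i \<le> c$i + 1)"
proof -
  have "(rat_of_int (c$i) \<le> of_int (z$i) \<and> of_int (z$i) \<le> rat_of_int (c$i) + 1) \<longleftrightarrow> (c$i \<le> z$i \<and> z$i \<le> c$i + 1)" for i
    by (metis of_int_1 of_int_add of_int_le_iff)
  then show ?thesis unfolding G_def by simp
qed

lemma descent:
  fixes c d z :: "int^'n"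
  assumes G: "G c d z t" and nz: "z \<noteq> c"
  shows "\<exists>z' t'. G c d z' t' \<and> lattice_step z z' \<and> M c z' < M c z"
proof (cases "\<forall>i. c$i \<le> z$i \<and> z$i \<le> c$i + 1")
  case True
  from nz obtain i where "z$i \<noteq> c$i" by (auto simp: vec_eq_iff)
  moreover have "c$i \<le> z$i" "z$i \<le> c$i + 1" using True by auto
  ultimately have zi: "z$i = c$i + 1" by linarith
  have "G c d (upd z i (z$i - 1)) 0" unfolding G_box upd_def using True zi by auto
  moreover have "M c (upd z i (z$i - 1)) < M c z" by (rule upd_M) (simp add: zi)
  ultimately show ?thesis using upd_step_minus by blast
next
  case False
  define e where "e i = (of_int (d$i) - of_int (c$i) :: rat)" for i
  define L where "L i = (if e i > 0 then (of_int (z$i) - 1 - of_int (c$i)) / e i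
      else if e i < 0 then (of_int (z$i) - of_int (c$i)) / e i else 0)" for i
  define mx where "mx = Max (range L)"
  define ts where "ts = max 0 mx"
  have t01: "0 \<le> t" "t \<le> 1" using G unfolding G_def by auto
  have b: "of_int (c$i) + t * e i \<le> of_int (z$i) \<and> of_int (z$i) \<le> of_int (c$i) + t * e i + 1" for i
    using G unfolding G_def e_def by simp
  have Lt: "L i \<le> t" for i
  proof -
    consider "e i > 0" | "e i < 0" | "e i = 0" by linarith
    then show ?thesis
    proof cases
      case 1
      then show ?thesis using b[of i] t01 unfolding L_def by (simp add: pos_divide_le_eq)
    next
      case 2
      then show ?thesis using b[of i] t01 unfolding L_def by (simp add: neg_divide_le_eq)
    next
      case 3
      then show ?thesis using t01 unfolding L_def by simp
    qed
  qed
  have Lmx: "L i \<le> mx" for i unfolding mx_def by (rule Max_ge) auto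
  have mxt: "mx \<le> t" unfolding mx_def using Lt by (intro Max.boundedI) auto
  have ts: "0 \<le> ts" "ts \<le> t" "ts \<le> 1" "\<And>i. L i \<le> ts" using mxt t01 Lmx unfolding ts_def
    by (auto intro: order.trans simp: le_max_iff_disj)
  have Gts: "G c d z ts"
    unfolding G_def
  proof (intro conjI allI)
    show "0 \<le> ts" "ts \<le> 1" using ts by auto
    fix i
    consider "e i > 0" | "e i < 0" | "e i = 0" by linarith
    hence "of_int (c$i) + ts * e i \<le> of_int (z$i) \<and> of_int (z$i) \<le> of_int (c$i) + ts * e i + 1"
    proof cases
      case 1
      have "ts * e i \<le> t * e i" using 1 ts by (intro mult_right_mono) auto
      moreover have "of_int (z$i) - 1 - of_int (c$i) \<le> ts * e i"
        using ts(4)[of i] 1 unfolding L_def by (simp add: pos_divide_le_eq)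
      ultimately show ?thesis using b[of i] by linarith
    next
      case 2
      have "t * e i \<le> ts * e i" using 2 ts by (intro mult_right_mono_neg) auto
      moreover have "ts * e i \<le> of_int (z$i) - of_int (c$i)"
        using ts(4)[of i] 2 unfolding L_def by (simp add: neg_divide_le_eq)
      ultimately show ?thesis using b[of i] by linarith
    next
      case 3
      then show ?thesis using b[of i] by simp
    qed
    then show "of_int (c$i) + ts * (of_int (d$i) - of_int (c$i)) \<le> of_int (z$i)"
      "of_int (z$i) \<le> of_int (c$i) + ts * (of_int (d$i) - of_int (c$i)) + 1"
      unfolding e_def by auto
  qed
  have "ts \<noteq> 0"
  proof
    assume "ts = 0"
    with Gts have "G c d z 0" by simp
    with False show False unfolding G_box by blast
  qed
  hence tspos: "ts > 0" "ts = mx" using ts unfolding ts_def by auto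
  have "mx \<in> range L" unfolding mx_def by (rule Max_in) auto
  then obtain i where Li: "L i = ts" using tspos by auto
  have bts: "of_int (c$i) + ts * e i \<le> of_int (z$j) \<and> of_int (z$j) \<le> of_int (c$i) + ts * e i + 1" if "j = i" for j
    using Gts that unfolding G_def e_def by simp
  consider "e i > 0" | "e i < 0" | "e i = 0" by linarith
  then show ?thesis
  proof cases
    case 1
    hence eq: "of_int (z$i) - 1 - of_int (c$i) = ts * e i"
      using Li unfolding L_def by (simp add: divide_eq_eq)
    have "ts * e i > 0" using 1 tspos by simp
    hence "rat_of_int (z$i - 1 - c$i) > 0" using eq by simp
    hence zc: "z$i - 1 - c$i > 0" by linarith
    have "G c d (upd z i (z$i - 1)) ts"
      by (rule upd_G[OF Gts]) (use eq 1 tspos in \<open>simp_all add: e_def\<close>)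
    moreover have "M c (upd z i (z$i - 1)) < M c z" by (rule upd_M) (use zc in simp)
    ultimately show ?thesis using upd_step_minus by blast
  next
    case 2
    hence eq: "of_int (z$i) - of_int (c$i) = ts * e i"
      using Li unfolding L_def by (simp add: divide_eq_eq)
    have "ts * e i < 0" using 2 tspos by (simp add: mult_pos_neg)
    hence "rat_of_int (z$i - c$i) < 0" using eq by simp
    hence zc: "z$i - c$i < 0" by linarith
    have "G c d (upd z i (z$i + 1)) ts"
      by (rule upd_G[OF Gts]) (use eq 2 tspos in \<open>simp_all add: e_def\<close>)
    moreover have "M c (upd z i (z$i + 1)) < M c z" by (rule upd_M) (use zc in simp)
    ultimately show ?thesis using upd_step_plus by blast
  next
    case 3
    then have "L i = 0" unfolding L_def by simp
    with Li tspos show ?thesis by simp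
  qed
qed


lemma path_of_rtranclp:
  assumes "(\<lambda>a b. P a \<and> P b \<and> lattice_step a b)\<^sup>*\<^sup>* x y" "P x"
  shows "\<exists>T n. T 0 = x \<and> T n = y \<and> (\<forall>j\<le>n. P (T j)) \<and> (\<forall>j<n. lattice_step (T j) (T (Suc j)))"
  using assms(1)
proof (induction rule: rtranclp_induct)
  case base
  then show ?case using assms(2) by (intro exI[of _ "\<lambda>_. x"] exI[of _ 0]) auto
next
  case (step y z)
  then obtain T n where T: "T 0 = x" "T n = y" "\<forall>j\<le>n. P (T j)" "\<forall>j<n. lattice_step (T j) (T (Suc j))"
    by blast
  define T' where "T' = T(Suc n := z)"
  have "T' 0 = x" "T' (Suc n) = z" using T unfolding T'_def by auto
  moreover have "\<forall>j\<le>Suc n. P (T' j)" using T step.hyps(2) unfolding T'_def by (auto simp: le_Suc_eq)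
  moreover have "\<forall>j<Suc n. lattice_step (T' j) (T' (Suc j))"
    using T step.hyps(2) unfolding T'_def by (auto simp: less_Suc_eq)
  ultimately show ?case by blast
qed

lemma rtranclp_sym:
  assumes "R\<^sup>*\<^sup>* a b" "\<And>x y. R x y \<Longrightarrow> R y x"
  shows "R\<^sup>*\<^sup>* b a"
  using assms(1)
proof (induction rule: rtranclp_induct)
  case base then show ?case by simp
next
  case (step y z)
  then show ?case using assms(2) by (meson converse_rtranclp_into_rtranclp)
qed

lemma to_c:
  fixes c d :: "int^'n"
  shows "G c d z t \<Longrightarrow> (\<lambda>a b. (\<exists>t. G c d a t) \<and> (\<exists>t. G c d b t) \<and> lattice_step a b)\<^sup>*\<^sup>* z c"
proof (induction "M c z" arbitrary: z t rule: less_induct)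
  case less
  show ?case
  proof (cases "z = c")
    case True then show ?thesis by simp
  next
    case False
    obtain z' t' where h: "G c d z' t'" "lattice_step z z'" "M c z' < M c z"
      using descent[OF less.prems False] by blast
    have "(\<lambda>a b. (\<exists>t. G c d a t) \<and> (\<exists>t. G c d b t) \<and> lattice_step a b)\<^sup>*\<^sup>* z' c"
      using less.hyps[OF h(3) h(1)] .
    moreover have "(\<exists>t. G c d z t) \<and> (\<exists>t. G c d z' t) \<and> lattice_step z z'"
      using h less.prems by blast
    ultimately show ?thesis
      by (rule converse_rtranclp_into_rtranclp[rotated])
  qed
qed

theorem mainTheorem20:
  fixes B0 B1 :: "(int^'n) set"
  assumes "is_box1 B0" and "is_box1 B1"
  shows "lattice_path_connected
           {z. int_to_rat_vec z \<in> rat_convex_hull (int_to_rat_vec ` (B0 \<union> B1))}"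
proof -
  obtain c d where B: "B0 = box1 c" "B1 = box1 d" using assms unfolding is_box1_def by blast
  define P where "P z = (\<exists>t. G c d z t)" for z
  have Seq: "{z. int_to_rat_vec z \<in> rat_convex_hull (int_to_rat_vec ` (B0 \<union> B1))} = {z. P z}"
  proof (intro Collect_cong iffI)
    fix z assume "int_to_rat_vec z \<in> rat_convex_hull (int_to_rat_vec ` (B0 \<union> B1))"
    from forward[OF this[unfolded B]] show "P z"
      unfolding P_def G_def by (simp add: int_to_rat_vec_def)
  next
    fix z assume "P z"
    then show "int_to_rat_vec z \<in> rat_convex_hull (int_to_rat_vec ` (B0 \<union> B1))"
      unfolding P_def B using backward by blast
  qed
  define R where "R a b = (P a \<and> P b \<and> lattice_step a b)" for a b
  have Rsym: "R x y \<Longrightarrow> R y x" for x y unfolding R_def using step_sym by blast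
  have toc: "P z \<Longrightarrow> R\<^sup>*\<^sup>* z c" for z
    unfolding P_def R_def using to_c by blast
  obtain i0 :: 'n where True by blast
  define c' where "c' = upd c i0 (c$i0 + 1)"
  have Pc: "P c" unfolding P_def by (rule exI[of _ 0]) (simp add: G_box)
  have Pc': "P c'" unfolding P_def c'_def
    by (rule exI[of _ 0]) (auto simp: G_box upd_def)
  have stc: "lattice_step c c'" unfolding c'_def by (rule upd_step_plus)
  have stc': "lattice_step c' c" using stc by (rule step_sym)
  show ?thesis
    unfolding Seq lattice_path_connected_def
  proof (intro ballI)
    fix z1 z2 assume z1: "z1 \<in> {z. P z}" and z2: "z2 \<in> {z. P z}"
    have "R\<^sup>*\<^sup>* z1 z2"
      using toc[of z1] rtranclp_sym[OF toc[of z2] Rsym] z1 z2 by (meson rtranclp_trans mem_Collect_eq)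
    from path_of_rtranclp[of P, OF this[unfolded R_def[abs_def]]] z1
    obtain T1 n where T1: "T1 0 = z1" "T1 n = z2" "\<forall>j\<le>n. P (T1 j)" "\<forall>j<n. lattice_step (T1 j) (T1 (Suc j))"
      by auto
    from path_of_rtranclp[of P, OF toc[of z2, unfolded R_def[abs_def]]] z2
    obtain T2 m where T2: "T2 0 = z2" "T2 m = c" "\<forall>j\<le>m. P (T2 j)" "\<forall>j<m. lattice_step (T2 j) (T2 (Suc j))"
      by auto
    define T where "T j = (if j \<le> n then T1 j else if j \<le> n + m then T2 (j - n)
        else if even (j - (n + m)) then c else c')" for j
    have A: "j \<le> n \<Longrightarrow> T j = T1 j" for j unfolding T_def by simp
    have Bq: "n \<le> j \<Longrightarrow> j \<le> n + m \<Longrightarrow> T j = T2 (j - n)" for j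
      unfolding T_def using T1(2) T2(1) by auto
    have C: "n + m \<le> j \<Longrightarrow> T j = (if even (j - (n + m)) then c else c')" for j
      unfolding T_def using T1(2) T2 by (cases "j = n + m") auto
    have PT: "P (T j)" for j
    proof -
      consider "j \<le> n" | "n \<le> j \<and> j \<le> n + m" | "n + m \<le> j" by linarith
      then show ?thesis
      proof cases
        case 1 then show ?thesis using A T1 by auto
      next
        case 2 then show ?thesis using Bq[of j] T2(3) by auto
      next
        case 3 then show ?thesis using C[of j] Pc Pc' by auto
      qed
    qed
    have ST: "lattice_step (T j) (T (Suc j))" for j
    proof -
      consider "j < n" | "n \<le> j \<and> j < n + m" | "n + m \<le> j" by linarith
      then show ?thesis
      proof cases
        case 1 then show ?thesis using A[of j] A[of "Suc j"] T1(4) by auto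
      next
        case 2
        then have "T j = T2 (j - n)" "T (Suc j) = T2 (Suc (j - n))"
          using Bq[of j] Bq[of "Suc j"] by (auto simp: Suc_diff_le)
        then show ?thesis using T2(4) 2 by auto
      next
        case 3
        then have "T j = (if even (j - (n + m)) then c else c')"
          "T (Suc j) = (if even (j - (n + m)) then c' else c)"
          using C[of j] C[of "Suc j"] by (auto simp: Suc_diff_le)
        then show ?thesis using stc stc' by auto
      qed
    qed
    show "\<exists>T n. (\<forall>i. T i \<in> {z. P z}) \<and> (\<forall>i. lattice_step (T i) (T (Suc i))) \<and> T 0 = z1 \<and> T n = z2"
      using PT ST A[of 0] A[of n] T1 by (intro exI[of _ T] exI[of _ n]) auto
  qed
qed

end
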